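(* Assume (G2) from the context, let $M:=2c_Dc^2$ and let $\alpha_M\in(0,1/4)$ be such that $M g(r)\le g(\alpha_Mr)$ for all $r>0$. Let $y\in X$, $r>0$ and $0<\alpha<\alpha_M$. Then $$G_{U(y,r)}(x,y)\ge\tfrac12\,G(x,y)\qquad\text{for all }x\in U(y,2\alpha r).$$
   Context: $(X,\rho)$ is a separable metric space; $U(x,r)$ the open ball. For every open $U\subseteq X$ and $x\in X$ a finite Borel measure $\mu_x^U$ on $X$ is given with $\mu_x^U(U)=0$, $\mu_x^U(X)\le1$, and $\mu_x^U=\varepsilon_x$ (Dirac) if $x\notin U$. $G\colon X\times X\to(0,\infty]$ is Borel. For open $V$, $G_V(x,y):=G(x,y)-\int G(z,y)\,d\mu_x^V(z)$ for $x,y\in V$ and $G_V:=0$ outside $V\times V$. (G2): there are a strictly decreasing continuous $g\colon[0,\infty)\to(0,\infty]$ and $c,c_D,M_0\in[1,\infty)$, $\alpha_0\in(0,1)$ with $g(r/2)\le c_Dg(r)$, $M_0g(r)\le g(\alpha_0r)$ for all $r>0$ and $c^{-1}g(\rho(x,y))\le G(x,y)\le c\,g(\rho(x,y))$ for all $x,y$. *)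

theory Defs
  imports "HOL-Probability.Probability"
begin

text \<open>Green function of an open set V:
  G_V(x,y) = G(x,y) - integral of G(z,y) d mu_x^V(z) for x,y in V, and 0 otherwise.
  Values are taken in ereal (the difference may a priori be negative).\<close>
definition greenV ::
  "('a::metric_space set \<Rightarrow> 'a \<Rightarrow> 'a measure) \<Rightarrow> ('a \<Rightarrow> 'a \<Rightarrow> ennreal) \<Rightarrow> 'a set \<Rightarrow> 'a \<Rightarrow> 'a \<Rightarrow> ereal"
where
  "greenV \<mu> G V x y =
     (if x \<in> V \<and> y \<in> V
      then enn2ereal (G x y) - enn2ereal (\<integral>\<^sup>+ z. G z y \<partial>(\<mu> V x))
      else 0)"

end

theory Submission
  imports Defs
begin


lemma aux: fixes a b :: ennreal assumes "b < top" "2*b \<le> a"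
  shows "enn2ereal a / 2 \<le> enn2ereal a - enn2ereal b"
proof (cases "a = top")
  case True thus ?thesis using assms by (cases b) auto
next
  case False
  then obtain x where x: "a = ennreal x" "x \<ge> 0" by (cases a) auto
  from assms(1) obtain w where w: "b = ennreal w" "w \<ge> 0" by (cases b) auto
  have "2*w \<le> x" using assms(2) x w
    by (metis ennreal_le_iff ennreal_mult'' ennreal_numeral mult_nonneg_nonneg zero_le_numeral ennreal_mult_eq_top_iff)
  thus ?thesis using x w by (simp add: enn2ereal_ennreal)
qed

theorem lemma6p5:
  fixes \<mu> :: "'a::metric_space set \<Rightarrow> 'a \<Rightarrow> 'a measure"
    and G :: "'a \<Rightarrow> 'a \<Rightarrow> ennreal"
    and g :: "real \<Rightarrow> ennreal"
    and c cD M0 \<alpha>0 \<alpha>M \<alpha> r :: real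
    and y :: 'a
  assumes separable: "\<exists>D::'a set. countable D \<and> closure D = UNIV"
    and mu_sets: "\<And>U x. open U \<Longrightarrow> sets (\<mu> U x) = sets borel"
    and mu_U: "\<And>U x. open U \<Longrightarrow> emeasure (\<mu> U x) U = 0"
    and mu_le1: "\<And>U x. open U \<Longrightarrow> emeasure (\<mu> U x) (space (\<mu> U x)) \<le> 1"
    and mu_outside: "\<And>U x. open U \<Longrightarrow> x \<notin> U \<Longrightarrow> \<mu> U x = return borel x"
    and G_pos: "\<And>x y. G x y > 0"
    and G_borel: "(\<lambda>(x, y). G x y) \<in> borel_measurable (borel \<Otimes>\<^sub>M borel)"
    and g_pos: "\<And>t. t \<ge> 0 \<Longrightarrow> g t > 0"
    and g_cont: "continuous_on {0..} g"
    and g_decr: "\<And>s t. 0 \<le> s \<Longrightarrow> s < t \<Longrightarrow> g t < g s"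
    and c_ge: "c \<ge> 1" and cD_ge: "cD \<ge> 1" and M0_ge: "M0 \<ge> 1"
    and \<alpha>0: "0 < \<alpha>0" "\<alpha>0 < 1"
    and doubling: "\<And>t. t > 0 \<Longrightarrow> g (t / 2) \<le> ennreal cD * g t"
    and M0_prop: "\<And>t. t > 0 \<Longrightarrow> ennreal M0 * g t \<le> g (\<alpha>0 * t)"
    and G_lower: "\<And>x y. ennreal (1 / c) * g (dist x y) \<le> G x y"
    and G_upper: "\<And>x y. G x y \<le> ennreal c * g (dist x y)"
    and \<alpha>M: "0 < \<alpha>M" "\<alpha>M < 1 / 4"
    and \<alpha>M_prop: "\<And>t. t > 0 \<Longrightarrow> ennreal (2 * cD * c\<^sup>2) * g t \<le> g (\<alpha>M * t)"
    and r_pos: "r > 0"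
    and \<alpha>: "0 < \<alpha>" "\<alpha> < \<alpha>M"
  shows "\<forall>x \<in> ball y (2 * \<alpha> * r). greenV \<mu> G (ball y r) x y \<ge> enn2ereal (G x y) / 2"
proof
  fix x assume xb: "x \<in> ball y (2 * \<alpha> * r)"
  define d where "d = dist x y"
  have d0: "0 \<le> d" "d < 2 * \<alpha> * r" using xb by (auto simp: d_def dist_commute)
  have "2*\<alpha>*r < 1*r" using \<alpha> \<alpha>M r_pos by (intro mult_strict_right_mono) auto
  hence xin: "x \<in> ball y r" using xb by (auto simp: dist_commute)
  have yin: "y \<in> ball y r" using r_pos by simp
  have gmono: "\<And>s t. 0 \<le> s \<Longrightarrow> s \<le> t \<Longrightarrow> g t \<le> g s"
    using g_decr by (metis order.order_iff_strict order.strict_implies_order)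
  have grtop: "g r < top" proof -
    have "g r < g 0" using g_decr[of 0 r] r_pos by simp
    thus ?thesis using top_greatest[of "g 0"] by (rule order.strict_trans2)
  qed
  let ?m = "\<mu> (ball y r) x"
  have ob: "open (ball y r)" by simp
  have AE: "AE z in ?m. z \<notin> ball y r"
  proof (rule AE_I')
    show "ball y r \<in> null_sets ?m" using mu_U[OF ob] mu_sets[OF ob] by (auto simp: null_sets_def)
  qed auto
  have I1: "(\<integral>\<^sup>+ z. G z y \<partial>?m) \<le> (\<integral>\<^sup>+ z. ennreal c * g r \<partial>?m)"
  proof (rule nn_integral_mono_AE)
    show "AE z in ?m. G z y \<le> ennreal c * g r" using AE
    proof eventually_elim
      case (elim z)
      hence "r \<le> dist z y" by (simp add: dist_commute)
      hence "g (dist z y) \<le> g r" using gmono r_pos by simp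
      hence "ennreal c * g (dist z y) \<le> ennreal c * g r" by (rule mult_left_mono) simp
      thus ?case using G_upper[of z y] by (rule order_trans[rotated])
    qed
  qed
  also have "\<dots> = ennreal c * g r * emeasure ?m (space ?m)" by simp
  also have "\<dots> \<le> ennreal c * g r" using mult_left_mono[OF mu_le1[OF ob], of "ennreal c * g r"] by simp
  finally have I: "(\<integral>\<^sup>+ z. G z y \<partial>?m) \<le> ennreal c * g r" .
  have "g r = g (2*r/2)" by simp
  also have "\<dots> \<le> ennreal cD * g (2*r)" using doubling[of "2*r"] r_pos by simp
  finally have s1: "g r \<le> ennreal cD * g (2*r)" .
  have "ennreal (2*c^2) * g r \<le> ennreal (2*c^2) * (ennreal cD * g (2*r))"
    using s1 by (simp add: mult_left_mono)
  also have "\<dots> = ennreal (2*cD*c^2) * g (2*r)"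
    proof -
    have "ennreal (2*cD*c^2) = ennreal (2*c^2) * ennreal cD" using c_ge cD_ge
      by (simp add: ennreal_mult[symmetric] mult_ac)
    thus ?thesis by (simp add: mult.assoc)
  qed
  also have "\<dots> \<le> g (\<alpha>M * (2*r))" using \<alpha>M_prop[of "2*r"] r_pos by simp
  also have "\<dots> \<le> g d" proof -
    have "\<alpha>*(2*r) \<le> \<alpha>M*(2*r)" using \<alpha> r_pos by (intro mult_right_mono) auto
    hence "d \<le> \<alpha>M * (2*r)" using d0 by (simp add: mult_ac)
    thus ?thesis using gmono d0 by blast
  qed
  finally have s2: "ennreal (2*c^2) * g r \<le> g d" .
  have "ennreal (1/c) * (ennreal (2*c^2) * g r) \<le> ennreal (1/c) * g d"
    using s2 by (simp add: mult_left_mono)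
  also have "\<dots> \<le> G x y" using G_lower[of x y] by (simp add: d_def)
  finally have s3: "ennreal (1/c) * (ennreal (2*c^2) * g r) \<le> G x y" .
  have "ennreal (1/c) * (ennreal (2*c^2) * g r) = 2 * (ennreal c * g r)"
  proof -
    have "ennreal (1/c) * ennreal (2*c^2) = ennreal (2 * c)"
      using c_ge by (simp add: ennreal_mult'[symmetric] power2_eq_square)
    also have "\<dots> = 2 * ennreal c" using c_ge by (simp add: ennreal_mult)
    finally show ?thesis by (metis mult.assoc)
  qed
  with s3 have s4: "2 * (ennreal c * g r) \<le> G x y" by simp
  have "2 * (\<integral>\<^sup>+ z. G z y \<partial>?m) \<le> G x y"
    using mult_left_mono[OF I, of 2] s4 by (rule order_trans) simp
  moreover have "(\<integral>\<^sup>+ z. G z y \<partial>?m) < top"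
    using I by (rule order.strict_trans1) (simp add: ennreal_mult_less_top grtop)
  ultimately show "greenV \<mu> G (ball y r) x y \<ge> enn2ereal (G x y) / 2"
    using aux[of "(\<integral>\<^sup>+ z. G z y \<partial>?m)" "G x y"] xin yin unfolding greenV_def by simp
qed

end
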